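(* Let $N\ge 1$ and let $\mathbf{Z}_{\mathrm{SS}}\in\mathbb{C}^{N\times N}$, $z_{\mathrm{G}},z_{\mathrm{L}},z_{\mathrm{TT}},z_{\mathrm{RR}},z_{\mathrm{TR}}\in\mathbb{C}$, row vectors $\mathbf{z}_{\mathrm{TS}},\mathbf{z}_{\mathrm{RS}}\in\mathbb{C}^{1\times N}$ and column vectors $\mathbf{z}_{\mathrm{ST}},\mathbf{z}_{\mathrm{SR}}\in\mathbb{C}^{N\times 1}$ be fixed, and let $R_0\ge 0$. For a real vector $\mathbf{z}_{\mathrm{RIS,Im}}\in\mathbb{R}^{N}$ put $\mathbf{z}_{\mathrm{RIS}}=R_0\mathbf{1}+j\,\mathbf{z}_{\mathrm{RIS,Im}}\in\mathbb{C}^N$ (so every entry of $\mathbf{z}_{\mathrm{RIS}}$ has real part $R_0$) and $$\mathbf{Z}_{\mathrm{SE}}=\mathbf{Z}_{\mathrm{SS}}+\mathrm{diag}(\mathbf{z}_{\mathrm{RIS}}),$$ $$\phi_{\mathrm{KL}}=z_{\mathrm{KL}}-\mathbf{z}_{\mathrm{KS}}\mathbf{Z}_{\mathrm{SE}}^{-1}\mathbf{z}_{\mathrm{SL}},\quad \mathrm{K},\mathrm{L}\in\{\mathrm{T},\mathrm{R}\},$$ $$\tilde{z}_{\mathrm{T}}=z_{\mathrm{G}}+\phi_{\mathrm{TT}},\qquad \tilde{z}_{\mathrm{R}}=z_{\mathrm{L}}+\phi_{\mathrm{RR}},\qquad a=\bigl(\tilde{z}_{\mathrm{T}}\tilde{z}_{\mathrm{R}}-\phi_{\mathrm{TR}}^{2}\bigr)^{-1},$$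 $$h_{\mathrm{E2E}}=\frac{z_{\mathrm{L}}\phi_{\mathrm{TR}}}{\tilde{z}_{\mathrm{T}}\tilde{z}_{\mathrm{R}}-\phi_{\mathrm{TR}}^{2}},\qquad f(\mathbf{z}_{\mathrm{RIS}})=|h_{\mathrm{E2E}}|^{2},$$ at any $\mathbf{z}_{\mathrm{RIS,Im}}$ where $\mathbf{Z}_{\mathrm{SE}}$ is invertible and $\tilde{z}_{\mathrm{T}}\tilde{z}_{\mathrm{R}}-\phi_{\mathrm{TR}}^{2}\neq 0$. Then the gradient of $f$, regarded as a real-valued function of $\mathbf{z}_{\mathrm{RIS,Im}}\in\mathbb{R}^N$, is $$\nabla_{\mathbf{z}_{\mathrm{RIS,Im}}}f(\mathbf{z}_{\mathrm{RIS}})=2\,\mathfrak{I}\bigl(h_{\mathrm{E2E}}\,\mathrm{vec}_{d}(\mathbf{E}^{*})\bigr),$$ where $$\mathbf{E}=z_{\mathrm{L}}a\,\mathbf{Z}_{\mathrm{SE}}^{-1}\Bigl(\bigl(2a\phi_{\mathrm{TR}}^{2}+1\bigr)\mathbf{z}_{\mathrm{SR}}\mathbf{z}_{\mathrm{TS}}-a\phi_{\mathrm{TR}}\tilde{z}_{\mathrm{R}}\,\mathbf{z}_{\mathrm{ST}}\mathbf{z}_{\mathrm{TS}}-a\phi_{\mathrm{TR}}\tilde{z}_{\mathrm{T}}\,\mathbf{z}_{\mathrm{SR}}\mathbf{z}_{\mathrm{RS}}\Bigr)\mathbf{Z}_{\mathrm{SE}}^{-1}.$$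
   Context: This is the end-to-end transfer function of a SISO link assisted by a reconfigurable intelligent surface (RIS) with $N$ elements modeled as mutually coupled thin wire dipoles loaded by tunable impedances $\mathbf{z}_{\mathrm{RIS}}$. Here $\mathbf{Z}_{\mathrm{SS}}$ is the mutual impedance matrix among RIS elements, $z_{\mathrm{G}}$ the generator internal impedance, $z_{\mathrm{L}}$ the receiver load impedance, $z_{\mathrm{TT}},z_{\mathrm{RR}}$ the self impedances of the transmit and receive antennas, $z_{\mathrm{TR}}=z_{\mathrm{RT}}$ their mutual impedance, $\mathbf{z}_{\mathrm{TS}},\mathbf{z}_{\mathrm{RS}}$ (row vectors) the mutual impedances between the transmit/receive antenna and the RIS elements, and $\mathbf{z}_{\mathrm{ST}},\mathbf{z}_{\mathrm{SR}}$ (column vectors) the mutual impedances between the RIS elements and the transmit/receive antenna. $j$ is the imaginary unit, $\mathbf{1}$ is the all-ones vector, $(\cdot)^*$ denotes entrywise complex conjugation, $\mathfrak{I}(\cdot)$ is the entrywise imaginary part, $\mathrm{diag}(\mathbf{x})$ is the diagonal matrix with diagonal $\mathbf{x}$, and $\mathrm{vec}_d(\mathbf{X})$ is the column vector of diagonal entries of the square matrix $\mathbf{X}$. *)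

theory Defs
  imports "HOL-Analysis.Analysis"
begin

definition diagm :: "complex^'n \<Rightarrow> complex^'n^'n" where
  "diagm d = (\<chi> i j. if i = j then d $ i else 0)"

definition outer :: "complex^'n \<Rightarrow> complex^'n \<Rightarrow> complex^'n^'n" where
  "outer u v = (\<chi> i j. u $ i * v $ j)"

definition zRIS :: "real \<Rightarrow> real^'n \<Rightarrow> complex^'n" where
  "zRIS R0 x = (\<chi> i. complex_of_real R0 + \<i> * complex_of_real (x $ i))"

definition ZSE :: "complex^'n^'n \<Rightarrow> real \<Rightarrow> real^'n \<Rightarrow> complex^'n^'n" where
  "ZSE ZSS R0 x = ZSS + diagm (zRIS R0 x)"

definition phi :: "complex \<Rightarrow> complex^'n \<Rightarrow> complex^'n^'n \<Rightarrow> complex^'n \<Rightarrow> complex" where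
  "phi zKL zKS Z zSL = zKL - (\<Sum>i\<in>UNIV. zKS $ i * ((matrix_inv Z *v zSL) $ i))"

end

theory Submission
  imports Defs
begin

lemma matrix_inv_props:
  fixes A :: "'a::semiring_1^'n^'n"
  assumes "invertible A"
  shows "A ** matrix_inv A = mat 1" "matrix_inv A ** A = mat 1"
proof -
  from assms obtain B where "A ** B = mat 1 \<and> B ** A = mat 1" unfolding invertible_def by blast
  hence "A ** matrix_inv A = mat 1 \<and> matrix_inv A ** A = mat 1"
    unfolding matrix_inv_def by (rule someI)
  thus "A ** matrix_inv A = mat 1" "matrix_inv A ** A = mat 1" by auto
qed

lemma cont_det:
  fixes A :: "real^'m \<Rightarrow> complex^'n^'n"
  assumes "\<And>i j. continuous (at x0) (\<lambda>x. A x $ i $ j)"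
  shows "continuous (at x0) (\<lambda>x. det (A x))"
  unfolding det_def by (intro continuous_intros assms)

lemma cont_nth: "continuous (at x0) (\<lambda>x::real^'n. x $ i)"
  by (intro linear_continuous_at bounded_linear_vec_nth bounded_linear_ident)

lemma cont_ZSE: "continuous (at x0) (\<lambda>x. ZSE ZSS R0 x $ i $ j)"
  unfolding ZSE_def diagm_def zRIS_def
  by (cases "i = j") (auto intro!: continuous_intros cont_nth)

lemma cramer_inv:
  fixes A :: "'a::field^'n^'n"
  assumes "det A \<noteq> 0"
  shows "matrix_inv A $ i $ j = det (\<chi> r c. if c = i then (if r = j then 1 else 0) else A$r$c) / det A"
proof -
  have inv: "invertible A" using assms invertible_det_nz by blast
  have "A *v (matrix_inv A *v axis j 1) = axis j 1"
    by (simp add: matrix_vector_mul_assoc matrix_inv_props[OF inv])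
  hence "matrix_inv A *v axis j 1 = (\<chi> k. det(\<chi> r c. if c=k then axis j 1 $r else A$r$c) / det A)"
    using cramer[OF assms] by blast
  hence "(matrix_inv A *v axis j 1) $ i = det(\<chi> r c. if c=i then axis j 1 $r else A$r$c) / det A"
    by simp
  moreover have "(matrix_inv A *v axis j 1) $ i = matrix_inv A $ i $ j"
    by (simp add: matrix_vector_mult_def axis_def if_distrib cong: if_cong)
  moreover have "(\<chi> r c. if c=i then axis j 1 $r else A$r$c) = (\<chi> r c. if c = i then (if r = j then 1 else 0) else A$r$c)"
    by (auto simp: axis_def vec_eq_iff)
  ultimately show ?thesis by simp
qed

lemma matrix_add_rdistrib': "((A::'a::semiring_1^'n^'m) + B) ** C = A ** C + B ** C"
  by (vector matrix_matrix_mult_def sum.distrib[symmetric] field_simps)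

lemma diagm_entry:
  fixes A B :: "complex^'n^'n"
  shows "((A ** diagm d) ** B) $ i $ j = (\<Sum>k\<in>UNIV. A$i$k * d$k * B$k$j)"
  unfolding matrix_matrix_mult_def diagm_def
  by (simp add: if_distrib if_distribR sum.delta' sum_distrib_right cong: if_cong)

lemma ZSE_diff: "ZSE ZSS R0 x0 = ZSE ZSS R0 y + diagm (\<chi> k. \<i> * of_real (x0$k - y$k))"
  unfolding ZSE_def diagm_def zRIS_def
  by (vector algebra_simps)

lemma inv_identity:
  assumes "invertible (ZSE ZSS R0 y)" "invertible (ZSE ZSS R0 x0)"
  shows "matrix_inv (ZSE ZSS R0 y) $ i $ j = matrix_inv (ZSE ZSS R0 x0) $ i $ j
     - (\<Sum>k\<in>UNIV. matrix_inv (ZSE ZSS R0 y) $ i $ k * (\<i> * matrix_inv (ZSE ZSS R0 x0) $ k $ j * of_real (y$k - x0$k)))"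
proof -
  let ?Zy = "ZSE ZSS R0 y" and ?Z0 = "ZSE ZSS R0 x0"
  let ?D = "diagm (\<chi> k. \<i> * of_real (x0$k - y$k))"
  have "matrix_inv ?Zy = matrix_inv ?Zy ** (?Z0 ** matrix_inv ?Z0)"
    by (simp add: matrix_inv_props[OF assms(2)])
  also have "\<dots> = (matrix_inv ?Zy ** ?Z0) ** matrix_inv ?Z0" by (simp add: matrix_mul_assoc)
  also have "\<dots> = (mat 1 + matrix_inv ?Zy ** ?D) ** matrix_inv ?Z0"
    by (subst ZSE_diff[of ZSS R0 x0 y]) (simp add: matrix_add_ldistrib matrix_inv_props[OF assms(1)])
  also have "\<dots> = matrix_inv ?Z0 + (matrix_inv ?Zy ** ?D) ** matrix_inv ?Z0"
    by (simp add: matrix_add_rdistrib')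
  finally have eq: "matrix_inv ?Zy = matrix_inv ?Z0 + (matrix_inv ?Zy ** ?D) ** matrix_inv ?Z0" .
  have "matrix_inv ?Zy $ i $ j = (matrix_inv ?Z0 + (matrix_inv ?Zy ** ?D) ** matrix_inv ?Z0) $ i $ j"
    by (rule arg_cong[where f="\<lambda>M. M $ i $ j", OF eq])
  also have "\<dots> = matrix_inv ?Z0 $ i $ j + ((matrix_inv ?Zy ** ?D) ** matrix_inv ?Z0) $ i $ j"
    by simp
  also have "\<dots> = matrix_inv ?Z0 $ i $ j + (\<Sum>k\<in>UNIV. matrix_inv ?Zy $ i $ k * (\<i> * of_real (x0$k - y$k)) * matrix_inv ?Z0 $ k $ j)"
    by (simp add: diagm_entry)
  also have "\<dots> = matrix_inv ?Z0 $ i $ j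
     - (\<Sum>k\<in>UNIV. matrix_inv ?Zy $ i $ k * (\<i> * matrix_inv ?Z0 $ k $ j * of_real (y$k - x0$k)))"
    unfolding diff_conv_add_uminus sum_negf[symmetric]
    by (intro arg_cong2[where f="(+)"] refl sum.cong) (simp_all add: algebra_simps)
  finally show ?thesis .
qed

lemma cont_inv_entry:
  assumes "det (ZSE ZSS R0 x0) \<noteq> 0"
  shows "continuous (at x0) (\<lambda>y. matrix_inv (ZSE ZSS R0 y) $ i $ j)"
proof -
  let ?N = "\<lambda>y. det (\<chi> r c. if c = i then (if r = j then 1 else 0) else ZSE ZSS R0 y $r$c :: complex^_^_)"
  let ?d = "\<lambda>y. det (ZSE ZSS R0 y)"
  have cN: "continuous (at x0) ?N"
    apply (rule cont_det)
    subgoal for r c by (cases "c = i") (auto intro: cont_ZSE)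
    done
  have cd: "continuous (at x0) ?d"
    by (rule cont_det) (rule cont_ZSE)
  have c: "continuous (at x0) (\<lambda>y. ?N y / ?d y)"
    using cN cd assms by (intro continuous_divide) auto
  have ev: "eventually (\<lambda>y. ?d y \<noteq> 0) (at x0)"
    using cd assms unfolding continuous_at by (rule tendsto_imp_eventually_ne)
  have "((\<lambda>y. ?N y / ?d y) \<longlongrightarrow> ?N x0 / ?d x0) (at x0)" using c unfolding continuous_at .
  hence "((\<lambda>y. matrix_inv (ZSE ZSS R0 y) $ i $ j) \<longlongrightarrow> ?N x0 / ?d x0) (at x0)"
    by (rule Lim_transform_eventually) (use ev in \<open>auto elim!: eventually_mono simp: cramer_inv\<close>)
  thus ?thesis unfolding continuous_at using cramer_inv[OF assms] by simp
qed

definition gd :: "complex^'n \<Rightarrow> real^'n \<Rightarrow> complex" where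
  "gd c v = (\<Sum>k\<in>UNIV. complex_of_real (v$k) * c$k)"

lemma bl_gd: "bounded_linear (gd (c::complex^'n))"
proof -
  have "linear (gd c)"
  proof (rule linearI)
    fix b1 b2 :: "real^'n" and r :: real
    show "gd c (b1 + b2) = gd c b1 + gd c b2" by (simp add: gd_def sum.distrib algebra_simps)
    have "gd c (r *\<^sub>R b1) = (\<Sum>k\<in>UNIV. of_real r * (of_real (b1$k) * c$k))"
      by (simp add: gd_def algebra_simps)
    also have "\<dots> = r *\<^sub>R gd c b1" by (simp add: gd_def scaleR_conv_of_real sum_distrib_left)
    finally show "gd c (r *\<^sub>R b1) = r *\<^sub>R gd c b1" .
  qed
  thus ?thesis by (simp add: linear_conv_bounded_linear)
qed

lemma deriv_cont_lin:
  fixes F :: "real^'n \<Rightarrow> complex"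
  assumes "continuous (at x0) F"
  shows "((\<lambda>y. F y * (c * of_real (y$k - x0$k))) has_derivative (\<lambda>v. F x0 * (c * of_real (v$k)))) (at x0)"
  unfolding has_derivative_iff_norm
proof
  have "linear (\<lambda>v::real^'n. F x0 * (c * of_real (v$k)))"
  proof (rule linearI)
    fix b1 b2 :: "real^'n" and r :: real
    show "F x0 * (c * of_real ((b1 + b2)$k)) = F x0 * (c * of_real (b1$k)) + F x0 * (c * of_real (b2$k))"
      by (simp add: algebra_simps)
    have "F x0 * (c * of_real ((r *\<^sub>R b1)$k)) = of_real r * (F x0 * (c * of_real (b1$k)))"
      by (simp add: algebra_simps)
    also have "\<dots> = r *\<^sub>R (F x0 * (c * of_real (b1$k)))" by (simp add: scaleR_conv_of_real)
    finally show "F x0 * (c * of_real ((r *\<^sub>R b1)$k)) = r *\<^sub>R (F x0 * (c * of_real (b1$k)))" .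
  qed
  thus "bounded_linear (\<lambda>v::real^'n. F x0 * (c * of_real (v$k)))" by (simp add: linear_conv_bounded_linear)
  let ?g = "\<lambda>y. norm (F y - F x0) * norm c"
  have g: "(?g \<longlongrightarrow> 0) (at x0)"
  proof -
    have "((\<lambda>y. F y - F x0) \<longlongrightarrow> 0) (at x0)"
      using assms unfolding continuous_at by (simp add: LIM_zero)
    hence "((\<lambda>y. norm (F y - F x0)) \<longlongrightarrow> 0) (at x0)" by (rule tendsto_norm_zero)
    thus ?thesis by (rule tendsto_mult_left_zero)
  qed
  show "((\<lambda>y. norm (F y * (c * of_real (y$k - x0$k)) - F x0 * (c * of_real (x0$k - x0$k))
          - F x0 * (c * of_real ((y - x0)$k))) / norm (y - x0)) \<longlongrightarrow> 0) (at x0)"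
  proof (rule Lim_null_comparison[OF _ g], rule always_eventually, rule allI)
    fix y :: "real^'n"
    have e: "F y * (c * of_real (y$k - x0$k)) - F x0 * (c * of_real (x0$k - x0$k))
          - F x0 * (c * of_real ((y - x0)$k)) = (F y - F x0) * c * of_real ((y - x0)$k)"
      by (simp add: algebra_simps)
    have b: "\<bar>(y - x0)$k\<bar> \<le> norm (y - x0)" by (rule component_le_norm_cart)
    show "norm (norm (F y * (c * of_real (y$k - x0$k)) - F x0 * (c * of_real (x0$k - x0$k))
          - F x0 * (c * of_real ((y - x0)$k))) / norm (y - x0)) \<le> ?g y"
    proof (cases "y = x0")
      case True thus ?thesis by simp
    next
      case False
      hence pos: "norm (y - x0) > 0" by simp
      have "norm ((F y - F x0) * c * of_real ((y - x0)$k)) = norm (F y - F x0) * norm c * \<bar>(y - x0)$k\<bar>"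
        by (simp add: norm_mult flip: of_real_diff)
      also have "\<dots> \<le> norm (F y - F x0) * norm c * norm (y - x0)"
        by (intro mult_left_mono b) simp
      finally have L: "norm ((F y - F x0) * c * of_real ((y - x0)$k)) \<le> norm (F y - F x0) * norm c * norm (y - x0)" .
      show ?thesis unfolding e real_norm_def abs_divide abs_norm_cancel
        using L by (simp only: pos_divide_le_eq[OF pos])
    qed
  qed
qed

lemma deriv_inv_entry:
  assumes inv: "invertible (ZSE ZSS R0 x0)"
  shows "((\<lambda>y. matrix_inv (ZSE ZSS R0 y) $ i $ j) has_derivative
     gd (\<chi> k. - (\<i> * matrix_inv (ZSE ZSS R0 x0) $ i $ k * matrix_inv (ZSE ZSS R0 x0) $ k $ j))) (at x0)"
proof -
  let ?Zi = "\<lambda>y. matrix_inv (ZSE ZSS R0 y)"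
  have d0: "det (ZSE ZSS R0 x0) \<noteq> 0" using inv invertible_det_nz by blast
  obtain d where d: "d > 0" "\<And>y. dist x0 y < d \<Longrightarrow> det (ZSE ZSS R0 y) \<noteq> 0"
    using continuous_at_avoid[OF cont_det[OF cont_ZSE] d0] by blast
  let ?g = "\<lambda>y. ?Zi x0 $ i $ j - (\<Sum>k\<in>UNIV. ?Zi y $ i $ k * ((\<i> * ?Zi x0 $ k $ j) * of_real (y$k - x0$k)))"
  have "(?g has_derivative (\<lambda>v. 0 - (\<Sum>k\<in>UNIV. ?Zi x0 $ i $ k * ((\<i> * ?Zi x0 $ k $ j) * of_real (v$k))))) (at x0)"
    by (intro has_derivative_diff has_derivative_const has_derivative_sum deriv_cont_lin cont_inv_entry d0)
  moreover have "(\<lambda>v. 0 - (\<Sum>k\<in>UNIV. ?Zi x0 $ i $ k * ((\<i> * ?Zi x0 $ k $ j) * of_real (v$k))))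
     = gd (\<chi> k. - (\<i> * ?Zi x0 $ i $ k * ?Zi x0 $ k $ j))"
    by (rule ext) (simp add: gd_def sum_negf[symmetric] algebra_simps)
  ultimately have D: "(?g has_derivative gd (\<chi> k. - (\<i> * ?Zi x0 $ i $ k * ?Zi x0 $ k $ j))) (at x0)"
    by simp
  show ?thesis
  proof (rule has_derivative_transform_within[OF D d(1)])
    fix y assume "dist y x0 < d"
    hence "det (ZSE ZSS R0 y) \<noteq> 0" using d(2) by (simp add: dist_commute)
    hence "invertible (ZSE ZSS R0 y)" using invertible_det_nz by blast
    thus "?g y = ?Zi y $ i $ j" using inv_identity[OF _ inv] by simp
  qed simp
qed

lemma phi_eq: "phi zKL zKS Z zSL = zKL - (\<Sum>i\<in>UNIV. zKS$i * (\<Sum>j\<in>UNIV. matrix_inv Z $ i $ j * zSL$j))"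
  by (simp add: phi_def matrix_vector_mult_def)

lemma sum_alg:
  fixes Z :: "complex^'n^'n"
  shows "(\<Sum>i\<in>UNIV. a$i * (\<Sum>j\<in>UNIV. (\<Sum>k\<in>UNIV. of_real (v$k) * - (\<i> * Z$i$k * Z$k$j)) * b$j))
   = - (\<Sum>k\<in>UNIV. of_real (v$k) * (\<i> * (\<Sum>i\<in>UNIV. a$i * Z$i$k) * (\<Sum>j\<in>UNIV. Z$k$j * b$j)))"
proof -
  have "(\<Sum>i\<in>UNIV. a$i * (\<Sum>j\<in>UNIV. (\<Sum>k\<in>UNIV. of_real (v$k) * - (\<i> * Z$i$k * Z$k$j)) * b$j))
     = (\<Sum>i\<in>UNIV. \<Sum>j\<in>UNIV. \<Sum>k\<in>UNIV. - (of_real (v$k) * \<i> * (a$i * Z$i$k) * (Z$k$j * b$j)))"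
    by (simp add: sum_distrib_left sum_distrib_right algebra_simps)
  also have "\<dots> = (\<Sum>k\<in>UNIV. \<Sum>i\<in>UNIV. \<Sum>j\<in>UNIV. - (of_real (v$k) * \<i> * (a$i * Z$i$k) * (Z$k$j * b$j)))"
    by (subst sum.swap, subst (2) sum.swap) (rule refl)
  also have "\<dots> = - (\<Sum>k\<in>UNIV. of_real (v$k) * (\<i> * (\<Sum>i\<in>UNIV. a$i * Z$i$k) * (\<Sum>j\<in>UNIV. Z$k$j * b$j)))"
    by (simp add: sum_distrib_left sum_distrib_right sum_negf algebra_simps)
  finally show ?thesis .
qed

lemma deriv_phi:
  assumes inv: "invertible (ZSE ZSS R0 x0)"
  shows "((\<lambda>y. phi zKL zKS (ZSE ZSS R0 y) zSL) has_derivative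
     gd (\<chi> k. \<i> * (\<Sum>i\<in>UNIV. zKS$i * matrix_inv (ZSE ZSS R0 x0) $ i $ k)
                * (\<Sum>j\<in>UNIV. matrix_inv (ZSE ZSS R0 x0) $ k $ j * zSL$j))) (at x0)"
proof -
  let ?Zi = "matrix_inv (ZSE ZSS R0 x0)"
  have "((\<lambda>y. phi zKL zKS (ZSE ZSS R0 y) zSL) has_derivative
     (\<lambda>v. 0 - (\<Sum>i\<in>UNIV. zKS$i * (\<Sum>j\<in>UNIV. gd (\<chi> k. - (\<i> * ?Zi $ i $ k * ?Zi $ k $ j)) v * zSL$j)))) (at x0)"
    unfolding phi_eq
    by (intro has_derivative_diff has_derivative_const has_derivative_sum has_derivative_mult_right
          has_derivative_mult_left deriv_inv_entry inv)
  moreover have "(\<lambda>v. 0 - (\<Sum>i\<in>UNIV. zKS$i * (\<Sum>j\<in>UNIV. gd (\<chi> k. - (\<i> * ?Zi $ i $ k * ?Zi $ k $ j)) v * zSL$j)))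
    = gd (\<chi> k. \<i> * (\<Sum>i\<in>UNIV. zKS$i * ?Zi $ i $ k) * (\<Sum>j\<in>UNIV. ?Zi $ k $ j * zSL$j))"
    by (rule ext) (simp only: gd_def vec_lambda_beta sum_alg, simp)
  ultimately show ?thesis by simp
qed

lemma gd_eqI: "(f has_derivative f') F \<Longrightarrow> f' = g' \<Longrightarrow> (f has_derivative g') F" by simp

lemma gd_const: "((\<lambda>x. c) has_derivative gd 0) (at x0)"
  by (rule gd_eqI[OF has_derivative_const]) (simp add: gd_def fun_eq_iff)

lemma gd_add: "(F has_derivative gd a) (at x0) \<Longrightarrow> (G has_derivative gd b) (at x0) \<Longrightarrow>
  ((\<lambda>x. F x + G x) has_derivative gd (a + b)) (at x0)"
  by (rule gd_eqI[OF has_derivative_add]) (auto simp: gd_def fun_eq_iff sum.distrib algebra_simps)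

lemma gd_diff: "(F has_derivative gd a) (at x0) \<Longrightarrow> (G has_derivative gd b) (at x0) \<Longrightarrow>
  ((\<lambda>x. F x - G x) has_derivative gd (a - b)) (at x0)"
  by (rule gd_eqI[OF has_derivative_diff]) (auto simp: gd_def fun_eq_iff sum_subtractf algebra_simps)

lemma gd_mult: "(F has_derivative gd a) (at x0) \<Longrightarrow> (G has_derivative gd b) (at x0) \<Longrightarrow>
  ((\<lambda>x. F x * G x) has_derivative gd (\<chi> k. F x0 * b$k + a$k * G x0)) (at x0)"
  by (rule gd_eqI[OF has_derivative_mult])
     (auto simp: gd_def fun_eq_iff sum.distrib sum_distrib_left sum_distrib_right algebra_simps)

lemma gd_divide: "(F has_derivative gd a) (at x0) \<Longrightarrow> (G has_derivative gd b) (at x0) \<Longrightarrow> G x0 \<noteq> 0 \<Longrightarrow>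
  ((\<lambda>x. F x / G x) has_derivative gd (\<chi> k. (a$k * G x0 - F x0 * b$k) / (G x0 * G x0))) (at x0)"
  by (rule gd_eqI[OF has_derivative_divide'])
     (auto simp: gd_def fun_eq_iff sum_divide_distrib[symmetric] sum_subtractf sum_distrib_left sum_distrib_right algebra_simps)

lemma outer_entry:
  fixes A B :: "complex^'n^'n"
  shows "((A ** outer u w) ** B)$k$l = (\<Sum>j\<in>UNIV. A$k$j*u$j) * (\<Sum>i\<in>UNIV. w$i*B$i$l)"
proof -
  have "((A ** outer u w) ** B)$k$l = (\<Sum>q\<in>UNIV. (\<Sum>p\<in>UNIV. A$k$p * (u$p * w$q)) * B$q$l)"
    by (simp add: matrix_matrix_mult_def outer_def)
  also have "\<dots> = (\<Sum>q\<in>UNIV. (\<Sum>p\<in>UNIV. A$k$p * u$p) * (w$q * B$q$l))"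
    by (rule sum.cong[OF refl]) (simp add: sum_distrib_right mult.assoc)
  also have "\<dots> = (\<Sum>j\<in>UNIV. A$k$j*u$j) * (\<Sum>i\<in>UNIV. w$i*B$i$l)"
    by (simp add: sum_distrib_left)
  finally show ?thesis .
qed

lemma matrix_sub_ldistrib': "(A::'a::ring_1^'n^'m) ** (B - C) = A ** B - A ** C"
  by (vector matrix_matrix_mult_def sum_subtractf[symmetric] field_simps)
lemma matrix_sub_rdistrib': "((A::'a::ring_1^'n^'m) - B) ** C = A ** C - B ** C"
  by (vector matrix_matrix_mult_def sum_subtractf[symmetric] field_simps)

lemma E_entry:
  fixes Zi :: "complex^'n^'n"
  shows "((Zi ** (\<chi> p q. \<alpha> * outer u1 w1 $ p $ q - \<beta> * outer u2 w2 $ p $ q - \<gamma> * outer u3 w3 $ p $ q)) ** Zi) $ k $ k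
   = \<alpha> * (\<Sum>j\<in>UNIV. Zi$k$j*u1$j) * (\<Sum>i\<in>UNIV. w1$i*Zi$i$k)
   - \<beta> * (\<Sum>j\<in>UNIV. Zi$k$j*u2$j) * (\<Sum>i\<in>UNIV. w2$i*Zi$i$k)
   - \<gamma> * (\<Sum>j\<in>UNIV. Zi$k$j*u3$j) * (\<Sum>i\<in>UNIV. w3$i*Zi$i$k)"
proof -
  have M: "(\<chi> p q. \<alpha> * outer u1 w1 $ p $ q - \<beta> * outer u2 w2 $ p $ q - \<gamma> * outer u3 w3 $ p $ q)
     = outer (\<alpha> *s u1) w1 - outer (\<beta> *s u2) w2 - outer (\<gamma> *s u3) w3"
    by (vector outer_def algebra_simps)
  show ?thesis
    unfolding M matrix_sub_ldistrib' matrix_sub_rdistrib'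
    by (simp add: outer_entry sum_distrib_left algebra_simps)
qed

lemma final_real:
  assumes h: "(h has_derivative gd c) (at x0)" and ce: "\<And>k. c$k = \<i> * e k" and h0: "h x0 = h0"
  shows "((\<lambda>x. (cmod (h x))\<^sup>2) has_derivative (\<lambda>v. (\<chi> k. 2 * Im (h0 * cnj (e k))) \<bullet> v)) (at x0)"
proof -
  have eq: "(\<lambda>x. (cmod (h x))\<^sup>2) = (\<lambda>x. Re (h x * cnj (h x)))"
    by (rule ext) (simp add: complex_mult_cnj cmod_def)
  have D: "((\<lambda>x. Re (h x * cnj (h x))) has_derivative
        (\<lambda>v. Re (h x0 * cnj (gd c v) + gd c v * cnj (h x0)))) (at x0)"
    by (intro has_derivative_Re has_derivative_mult has_derivative_cnj h)
  show ?thesis unfolding eq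
  proof (rule gd_eqI[OF D], rule ext)
    fix v :: "real^'a"
    show "Re (h x0 * cnj (gd c v) + gd c v * cnj (h x0)) = (\<chi> k. 2 * Im (h0 * cnj (e k))) \<bullet> v"
      by (simp add: h0 gd_def inner_vec_def cnj_sum sum_distrib_left sum_distrib_right Re_sum
            sum.distrib[symmetric] ce algebra_simps)
  qed
qed


lemma key:
  fixes zL zG pT pR p tT tR sT sR :: complex
  assumes D: "(zG + pT) * (zL + pR) - p * p \<noteq> 0"
  shows "((zL * (\<i> * tT * sR)) * ((zG + pT) * (zL + pR) - p * p)
     - zL * p * (((zG + pT) * (\<i> * tR * sR) + (\<i> * tT * sT) * (zL + pR)) - (p * (\<i> * tT * sR) + \<i> * tT * sR * p)))
     / (((zG + pT) * (zL + pR) - p * p) * ((zG + pT) * (zL + pR) - p * p))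
   = \<i> * (zL * inverse ((zG + pT) * (zL + pR) - p\<^sup>2) *
       ((2 * inverse ((zG + pT) * (zL + pR) - p\<^sup>2) * p\<^sup>2 + 1) * sR * tT
        - inverse ((zG + pT) * (zL + pR) - p\<^sup>2) * p * (zL + pR) * sT * tT
        - inverse ((zG + pT) * (zL + pR) - p\<^sup>2) * p * (zG + pT) * sR * tR))"
proof -
  define d where "d = (zG + pT) * (zL + pR) - p * p"
  have d0: "d \<noteq> 0" using D d_def by simp
  have p2: "(zG + pT) * (zL + pR) - p\<^sup>2 = d" by (simp add: d_def power2_eq_square)
  show ?thesis unfolding p2 unfolding d_def[symmetric]
    using d0 by (simp add: field_simps power2_eq_square)
qed

theorem lemma1:
  fixes ZSS :: "complex^'n^'n"
    and zG zL zTT zRR zTR :: complex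
    and zTS zRS zST zSR :: "complex^'n"
    and R0 :: real
    and x0 :: "real^'n"
  defines "hE2E \<equiv> (\<lambda>x::real^'n.
      let Z = ZSE ZSS R0 x;
          pTT = phi zTT zTS Z zST;
          pRR = phi zRR zRS Z zSR;
          pTR = phi zTR zTS Z zSR;
          zT = zG + pTT;
          zR = zL + pRR
      in zL * pTR / (zT * zR - pTR ^ 2))"
  assumes R0: "R0 \<ge> 0"
    and inv: "invertible (ZSE ZSS R0 x0)"
    and den: "(zG + phi zTT zTS (ZSE ZSS R0 x0) zST) * (zL + phi zRR zRS (ZSE ZSS R0 x0) zSR)
              - (phi zTR zTS (ZSE ZSS R0 x0) zSR) ^ 2 \<noteq> 0"
  shows "let Z = ZSE ZSS R0 x0;
             Zi = matrix_inv Z;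
             pTT = phi zTT zTS Z zST;
             pRR = phi zRR zRS Z zSR;
             pTR = phi zTR zTS Z zSR;
             zT = zG + pTT;
             zR = zL + pRR;
             a = inverse (zT * zR - pTR ^ 2);
             h = zL * pTR / (zT * zR - pTR ^ 2);
             E = (\<chi> i j. zL * a * (Zi **
                   ((\<chi> p q. (2 * a * pTR ^ 2 + 1) * outer zSR zTS $ p $ q
                      - a * pTR * zR * outer zST zTS $ p $ q
                      - a * pTR * zT * outer zSR zRS $ p $ q)) ** Zi) $ i $ j);
             g = (\<chi> i. 2 * Im (h * cnj (E $ i $ i)))
         in ((\<lambda>x. (cmod (hE2E x))\<^sup>2) has_derivative (\<lambda>v. g \<bullet> v)) (at x0)"
proof -
  let ?pTT = "\<lambda>y. phi zTT zTS (ZSE ZSS R0 y) zST"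
  let ?pRR = "\<lambda>y. phi zRR zRS (ZSE ZSS R0 y) zSR"
  let ?pTR = "\<lambda>y. phi zTR zTS (ZSE ZSS R0 y) zSR"
  have hE: "hE2E = (\<lambda>x. (\<lambda>x. zL * ?pTR x) x / (\<lambda>x. (zG + ?pTT x) * (zL + ?pRR x) - ?pTR x * ?pTR x) x)"
    unfolding hE2E_def Let_def by (simp add: power2_eq_square)
  note dTT = deriv_phi[OF inv, of zTT zTS zST]
  note dRR = deriv_phi[OF inv, of zRR zRS zSR]
  note dTR = deriv_phi[OF inv, of zTR zTS zSR]
  have den': "(zG + ?pTT x0) * (zL + ?pRR x0) - ?pTR x0 * ?pTR x0 \<noteq> 0"
    using den by (simp add: power2_eq_square)
  note dh = gd_divide[OF gd_mult[OF gd_const dTR]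
     gd_diff[OF gd_mult[OF gd_add[OF gd_const dTT] gd_add[OF gd_const dRR]] gd_mult[OF dTR dTR]] den']
  show ?thesis unfolding Let_def
    apply (rule final_real[where h=hE2E])
      apply (subst hE, rule dh)
     prefer 2
     apply (simp add: hE2E_def Let_def)
    apply (simp only: vec_lambda_beta vector_add_component vector_minus_component zero_index
        mult_zero_left add_0_left add_0_right E_entry)
    apply (rule key)
    apply (rule den')
    done
qed

end
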